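(* Let $\mathcal X\subseteq\{0,1\}^n$, $\hat{\pmb c},\pmb d\in\mathbb R^n_{\ge0}$ and let $\Gamma\in\{0,\dots,n\}$. Then any optimal solution of the nominal problem $\min_{\pmb x\in\mathcal X}(\hat{\pmb c}+\pmb d)^t\pmb x$ is also an optimal solution of the balanced regret problem \[\min_{\pmb x\in\mathcal X}\ \max_{\pmb\delta\in\Delta(\Gamma),\,\pmb y\in\mathcal X}\ \min_{\pmb\epsilon\in\Delta(\Gamma')}\ \sum_{i\in[n]}(\hat c_i+d_i\delta_i+d_i\epsilon_i)(x_i-y_i)\] with $\Gamma'=n$.
   Context: $[n]=\{1,\dots,n\}$; for an integer $k\ge0$, $\Delta(k)=\{\pmb\delta\in\{0,1\}^n:\sum_i\delta_i\le k\}$. $\mathcal X$ is the (nonempty) set of feasible solutions of a combinatorial optimization problem, described as the intersection of a polyhedron with $\{0,1\}^n$. *)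

theory Defs
  imports Complex_Main
begin

text \<open>Vectors in R^n are modelled as functions nat => real indexed by [n] = {1..n};
  binary vectors are required to vanish outside [n], so that {0,1}^n is a finite set.\<close>

definition binvecs :: "nat \<Rightarrow> (nat \<Rightarrow> real) set" where
  "binvecs n = {x. (\<forall>i\<in>{1..n}. x i \<in> {0, 1}) \<and> (\<forall>i. i \<notin> {1..n} \<longrightarrow> x i = 0)}"

definition Delta :: "nat \<Rightarrow> nat \<Rightarrow> (nat \<Rightarrow> real) set" where
  "Delta n k = {\<delta> \<in> binvecs n. (\<Sum>i\<in>{1..n}. \<delta> i) \<le> real k}"

definition nominal_obj :: "nat \<Rightarrow> (nat \<Rightarrow> real) \<Rightarrow> (nat \<Rightarrow> real) \<Rightarrow> (nat \<Rightarrow> real) \<Rightarrow> real" where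
  "nominal_obj n c d x = (\<Sum>i\<in>{1..n}. (c i + d i) * x i)"

definition balanced_regret_obj ::
  "nat \<Rightarrow> (nat \<Rightarrow> real) set \<Rightarrow> (nat \<Rightarrow> real) \<Rightarrow> (nat \<Rightarrow> real) \<Rightarrow> nat \<Rightarrow> nat \<Rightarrow> (nat \<Rightarrow> real) \<Rightarrow> real" where
  "balanced_regret_obj n X c d \<Gamma> \<Gamma>' x =
     Max {Min {(\<Sum>i\<in>{1..n}. (c i + d i * \<delta> i + d i * \<epsilon> i) * (x i - y i)) | \<epsilon>. \<epsilon> \<in> Delta n \<Gamma>'}
          | \<delta> y. \<delta> \<in> Delta n \<Gamma> \<and> y \<in> X}"

definition is_optimal :: "(nat \<Rightarrow> real) set \<Rightarrow> ((nat \<Rightarrow> real) \<Rightarrow> real) \<Rightarrow> (nat \<Rightarrow> real) \<Rightarrow> bool" where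
  "is_optimal X f x \<longleftrightarrow> x \<in> X \<and> (\<forall>x'\<in>X. f x \<le> f x')"

end

theory Submission
  imports Defs
begin

lemma binvecs_finite: "finite (binvecs n)"
proof -
  have "binvecs n \<subseteq> (\<lambda>S i. if i \<in> S then (1::real) else 0) ` Pow {1..n}"
  proof
    fix x assume x: "x \<in> binvecs n"
    have "x = (\<lambda>i. if i \<in> {i. x i = 1} then (1::real) else 0)"
    proof
      fix i show "x i = (\<lambda>i. if i \<in> {i. x i = 1} then (1::real) else 0) i"
        using x unfolding binvecs_def by (cases "i \<in> {1..n}") auto
    qed
    moreover have "{i. x i = 1} \<subseteq> {1..n}" using x unfolding binvecs_def by force
    ultimately show "x \<in> (\<lambda>S i. if i \<in> S then (1::real) else 0) ` Pow {1..n}" by blast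
  qed
  then show ?thesis by (rule finite_subset) simp
qed

lemma Delta_finite: "finite (Delta n k)"
  unfolding Delta_def using binvecs_finite by simp

lemma zero_Delta: "(\<lambda>i. 0) \<in> Delta n k"
  unfolding Delta_def binvecs_def by auto

lemma bin_Delta: assumes "y \<in> binvecs n" shows "y \<in> Delta n n"
proof -
  have "(\<Sum>i\<in>{1..n}. y i) \<le> (\<Sum>i\<in>{1..n}. 1)"
    by (rule sum_mono) (use assms in \<open>force simp: binvecs_def\<close>)
  then show ?thesis using assms unfolding Delta_def by simp
qed

lemma fin_outer: "finite {Min {(\<Sum>i\<in>{1..n}. (c i + d i * \<delta> i + d i * \<epsilon> i) * (x i - y i)) | \<epsilon>. \<epsilon> \<in> Delta n G'}
          | \<delta> y. \<delta> \<in> Delta n G \<and> y \<in> X}" if "finite X"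
proof -
  have "{Min {(\<Sum>i\<in>{1..n}. (c i + d i * \<delta> i + d i * \<epsilon> i) * (x i - y i)) | \<epsilon>. \<epsilon> \<in> Delta n G'}
          | \<delta> y. \<delta> \<in> Delta n G \<and> y \<in> X} = (\<lambda>(\<delta>,y). Min {(\<Sum>i\<in>{1..n}. (c i + d i * \<delta> i + d i * \<epsilon> i) * (x i - y i)) | \<epsilon>. \<epsilon> \<in> Delta n G'}) ` (Delta n G \<times> X)"
    by auto
  then show ?thesis using Delta_finite that by simp
qed

theorem theorem1:
  fixes n :: nat and X :: "(nat \<Rightarrow> real) set" and c d :: "nat \<Rightarrow> real" and \<Gamma> :: nat
    and x :: "nat \<Rightarrow> real"
  assumes "X \<subseteq> binvecs n" and "X \<noteq> {}"
    and "\<forall>i\<in>{1..n}. c i \<ge> 0" and "\<forall>i\<in>{1..n}. d i \<ge> 0"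
    and "\<Gamma> \<le> n"
    and "is_optimal X (nominal_obj n c d) x"
  shows "is_optimal X (balanced_regret_obj n X c d \<Gamma> n) x"
proof -
  have finX: "finite X" using assms(1) binvecs_finite finite_subset by blast
  have xX: "x \<in> X" and nom: "\<forall>x'\<in>X. nominal_obj n c d x \<le> nominal_obj n c d x'"
    using assms(6) unfolding is_optimal_def by auto
  have ge: "balanced_regret_obj n X c d \<Gamma> n x' \<ge> 0" if x': "x' \<in> X" for x'
  proof -
    have "{(\<Sum>i\<in>{1..n}. (c i + d i * (\<lambda>i. 0) i + d i * \<epsilon> i) * (x' i - x' i)) | \<epsilon>. \<epsilon> \<in> Delta n n} = {0}"
      using zero_Delta by auto
    then have m0: "Min {(\<Sum>i\<in>{1..n}. (c i + d i * (\<lambda>i. 0) i + d i * \<epsilon> i) * (x' i - x' i)) | \<epsilon>. \<epsilon> \<in> Delta n n} = 0"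
      by simp
    have "Min {(\<Sum>i\<in>{1..n}. (c i + d i * (\<lambda>i. 0) i + d i * \<epsilon> i) * (x' i - x' i)) | \<epsilon>. \<epsilon> \<in> Delta n n}
       \<in> {Min {(\<Sum>i\<in>{1..n}. (c i + d i * \<delta> i + d i * \<epsilon> i) * (x' i - y i)) | \<epsilon>. \<epsilon> \<in> Delta n n}
          | \<delta> y. \<delta> \<in> Delta n \<Gamma> \<and> y \<in> X}"
      by (intro CollectI exI[where x="\<lambda>i. 0"] exI[where x=x']) (use zero_Delta x' in simp)
    then have "0 \<in> {Min {(\<Sum>i\<in>{1..n}. (c i + d i * \<delta> i + d i * \<epsilon> i) * (x' i - y i)) | \<epsilon>. \<epsilon> \<in> Delta n n}
          | \<delta> y. \<delta> \<in> Delta n \<Gamma> \<and> y \<in> X}"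
      unfolding m0 .
    then show ?thesis unfolding balanced_regret_obj_def
      using fin_outer[OF finX] by (meson Max_ge order_trans order_refl)
  qed
  have le: "balanced_regret_obj n X c d \<Gamma> n x \<le> 0"
    unfolding balanced_regret_obj_def
  proof (subst Max_le_iff[OF fin_outer[OF finX]])
    show "{Min {(\<Sum>i\<in>{1..n}. (c i + d i * \<delta> i + d i * \<epsilon> i) * (x i - y i)) | \<epsilon>. \<epsilon> \<in> Delta n n}
          | \<delta> y. \<delta> \<in> Delta n \<Gamma> \<and> y \<in> X} \<noteq> {}" using zero_Delta xX by blast
    show "\<forall>a\<in>{Min {(\<Sum>i\<in>{1..n}. (c i + d i * \<delta> i + d i * \<epsilon> i) * (x i - y i)) | \<epsilon>. \<epsilon> \<in> Delta n n}
          | \<delta> y. \<delta> \<in> Delta n \<Gamma> \<and> y \<in> X}. a \<le> 0"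
    proof safe
      fix \<delta> y assume \<delta>: "\<delta> \<in> Delta n \<Gamma>" and y: "y \<in> X"
      let ?T = "{(\<Sum>i\<in>{1..n}. (c i + d i * \<delta> i + d i * \<epsilon> i) * (x i - y i)) | \<epsilon>. \<epsilon> \<in> Delta n n}"
      have finT: "finite ?T"
      proof -
        have "?T = (\<lambda>\<epsilon>. \<Sum>i\<in>{1..n}. (c i + d i * \<delta> i + d i * \<epsilon> i) * (x i - y i)) ` Delta n n" by auto
        then show ?thesis using Delta_finite by simp
      qed
      have yb: "y \<in> binvecs n" and xb: "x \<in> binvecs n" using y xX assms(1) by auto
      have inT: "(\<Sum>i\<in>{1..n}. (c i + d i * \<delta> i + d i * y i) * (x i - y i)) \<in> ?T"
        using bin_Delta[OF yb] by blast
      have "(\<Sum>i\<in>{1..n}. (c i + d i * \<delta> i + d i * y i) * (x i - y i))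
           \<le> (\<Sum>i\<in>{1..n}. (c i + d i) * (x i - y i))"
      proof (rule sum_mono)
        fix i assume i: "i \<in> {1..n}"
        have "x i \<in> {0,1}" "y i \<in> {0,1}" "\<delta> i \<in> {0,1}"
          using i xb yb \<delta> unfolding binvecs_def Delta_def by auto
        moreover have "d i \<ge> 0" using i assms(4) by auto
        ultimately show "(c i + d i * \<delta> i + d i * y i) * (x i - y i) \<le> (c i + d i) * (x i - y i)"
          by auto
      qed
      also have "\<dots> = nominal_obj n c d x - nominal_obj n c d y"
        unfolding nominal_obj_def by (simp add: algebra_simps sum_subtractf)
      also have "\<dots> \<le> 0" using nom y by auto
      finally have "(\<Sum>i\<in>{1..n}. (c i + d i * \<delta> i + d i * y i) * (x i - y i)) \<le> 0" .
      then show "Min ?T \<le> 0" using Min_le[OF finT inT] by linarith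
    qed
  qed
  show ?thesis unfolding is_optimal_def using xX ge le by (meson order_trans)
qed

end
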